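(* Let $X$ be a topological space, $G$ a group and $\varphi\colon G\times X\to X$ a continuous action that is cocompactly expansive. Let $H\le G$ be a syndetic subgroup. Then the restricted action $\varphi|_{H\times X}\colon H\times X\to X$ is continuous and cocompactly expansive.
   Context: Write $g\cdot x=\varphi(g,x)$. For a family $\mathcal U$ of subsets of $X$ and $A\subseteq X$, write $A\prec\mathcal U$ if $A\subseteq U$ for some $U\in\mathcal U$. The action is cocompactly expansive if there exist a finite open cover $\mathcal U$ of $X$ and a compact set $K\subseteq X$ such that (1) $G\cdot K=X$, and (2) whenever $x,y\in X$ satisfy $\{g\cdot x,g\cdot y\}\prec\mathcal U\cup\{X\setminus K\}$ for every $g\in G$, then $x=y$. (Equivalently, for all $x\neq y$ there is $g$ with $\{g\cdot x,g\cdot y\}\cap K\neq\emptyset$ and $\{g\cdot x,g\cdot y\}$ not contained in any member of $\mathcal U$.) A subgroup $H\le G$ is syndetic if there is a finite set $F\subseteq G$ with $G=FH$. *)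

theory Defs
  imports "HOL-Analysis.Analysis" "HOL-Algebra.Group"
begin

definition continuous_action :: "('a, 'c) monoid_scheme \<Rightarrow> 'b topology \<Rightarrow> ('a \<Rightarrow> 'b \<Rightarrow> 'b) \<Rightarrow> bool" where
  "continuous_action G X phi \<longleftrightarrow>
     (\<forall>g\<in>carrier G. \<forall>x\<in>topspace X. phi g x \<in> topspace X) \<and>
     (\<forall>x\<in>topspace X. phi \<one>\<^bsub>G\<^esub> x = x) \<and>
     (\<forall>g\<in>carrier G. \<forall>h\<in>carrier G. \<forall>x\<in>topspace X.
        phi (g \<otimes>\<^bsub>G\<^esub> h) x = phi g (phi h x)) \<and>
     continuous_map (prod_topology (discrete_topology (carrier G)) X) X (\<lambda>(g, x). phi g x)"

definition subordinate :: "'b set \<Rightarrow> 'b set set \<Rightarrow> bool" where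
  "subordinate A \<U> \<longleftrightarrow> (\<exists>U\<in>\<U>. A \<subseteq> U)"

definition cocompactly_expansive :: "('a, 'c) monoid_scheme \<Rightarrow> 'b topology \<Rightarrow> ('a \<Rightarrow> 'b \<Rightarrow> 'b) \<Rightarrow> bool" where
  "cocompactly_expansive G X phi \<longleftrightarrow>
     (\<exists>\<U> K. finite \<U> \<and> (\<forall>U\<in>\<U>. openin X U) \<and> \<Union>\<U> = topspace X \<and>
        compactin X K \<and>
        {phi g x | g x. g \<in> carrier G \<and> x \<in> K} = topspace X \<and>
        (\<forall>x\<in>topspace X. \<forall>y\<in>topspace X.
           (\<forall>g\<in>carrier G. subordinate {phi g x, phi g y} (\<U> \<union> {topspace X - K})) \<longrightarrow> x = y))"

definition syndetic :: "('a, 'c) monoid_scheme \<Rightarrow> 'a set \<Rightarrow> bool" where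
  "syndetic G H \<longleftrightarrow>
     (\<exists>F. finite F \<and> F \<subseteq> carrier G \<and> carrier G = {f \<otimes>\<^bsub>G\<^esub> h | f h. f \<in> F \<and> h \<in> H})"

end

theory Submission
  imports Defs
begin

lemma phi_cont:
  assumes "continuous_action G X phi" "f \<in> carrier G"
  shows "continuous_map X X (phi f)"
proof -
  have c: "continuous_map (prod_topology (discrete_topology (carrier G)) X) X (\<lambda>(g, x). phi g x)"
    using assms(1) unfolding continuous_action_def by blast
  have p: "continuous_map X (prod_topology (discrete_topology (carrier G)) X) (\<lambda>x. (f, x))"
    by (intro continuous_map_pairedI continuous_map_const[THEN iffD2] continuous_map_id[unfolded id_def]) (simp add: assms(2))
  have "continuous_map X X ((\<lambda>(g, x). phi g x) \<circ> (\<lambda>x. (f, x)))"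
    using continuous_map_compose[OF p c] .
  then show ?thesis by (simp add: o_def)
qed

theorem mainTheorem2:
  fixes G :: "('a, 'c) monoid_scheme" and X :: "'b topology" and phi :: "'a \<Rightarrow> 'b \<Rightarrow> 'b"
    and H :: "'a set"
  assumes "group G"
    and "continuous_action G X phi"
    and "cocompactly_expansive G X phi"
    and "subgroup H G"
    and "syndetic G H"
  shows "continuous_action (G\<lparr>carrier := H\<rparr>) X phi \<and> cocompactly_expansive (G\<lparr>carrier := H\<rparr>) X phi"
proof
  interpret grp: group G by fact
  have HG: "H \<subseteq> carrier G" using assms(4) subgroup.subset by blast
  have act1: "\<And>g x. g \<in> carrier G \<Longrightarrow> x \<in> topspace X \<Longrightarrow> phi g x \<in> topspace X"
   and act2: "\<And>x. x \<in> topspace X \<Longrightarrow> phi \<one>\<^bsub>G\<^esub> x = x"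
   and act3: "\<And>g h x. g \<in> carrier G \<Longrightarrow> h \<in> carrier G \<Longrightarrow> x \<in> topspace X \<Longrightarrow>
        phi (g \<otimes>\<^bsub>G\<^esub> h) x = phi g (phi h x)"
   and cont: "continuous_map (prod_topology (discrete_topology (carrier G)) X) X (\<lambda>(g, x). phi g x)"
    using assms(2) unfolding continuous_action_def by blast+
  show "continuous_action (G\<lparr>carrier := H\<rparr>) X phi"
  proof -
    have i: "continuous_map (prod_topology (discrete_topology H) X) (prod_topology (discrete_topology (carrier G)) X) (\<lambda>p. (fst p, snd p))"
    proof (intro continuous_map_pairedI continuous_map_snd)
      have "continuous_map (discrete_topology H) (discrete_topology (carrier G)) id"
        using HG by auto
      then show "continuous_map (prod_topology (discrete_topology H) X) (discrete_topology (carrier G)) fst"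
        using continuous_map_compose[OF continuous_map_fst] by (metis id_comp)
    qed
    have "continuous_map (prod_topology (discrete_topology H) X) X ((\<lambda>(g, x). phi g x) \<circ> (\<lambda>p. (fst p, snd p)))"
      using continuous_map_compose[OF i cont] .
    moreover have "(\<lambda>(g, x). phi g x) \<circ> (\<lambda>p. (fst p, snd p)) = (\<lambda>(g, x). phi g x)"
      by (rule ext) (simp add: case_prod_beta)
    ultimately have cH: "continuous_map (prod_topology (discrete_topology H) X) X (\<lambda>(g, x). phi g x)"
      by simp
    show ?thesis unfolding continuous_action_def
    proof (intro conjI ballI)
      show "phi g x \<in> topspace X" if "g \<in> carrier (G\<lparr>carrier := H\<rparr>)" "x \<in> topspace X" for g x
        using that act1 HG by auto
      show "phi \<one>\<^bsub>G\<lparr>carrier := H\<rparr>\<^esub> x = x" if "x \<in> topspace X" for x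
        using that act2 by simp
      show "phi (g \<otimes>\<^bsub>G\<lparr>carrier := H\<rparr>\<^esub> h) x = phi g (phi h x)"
        if "g \<in> carrier (G\<lparr>carrier := H\<rparr>)" "h \<in> carrier (G\<lparr>carrier := H\<rparr>)" "x \<in> topspace X" for g h x
        using that act3 HG by auto
      show "continuous_map (prod_topology (discrete_topology (carrier (G\<lparr>carrier := H\<rparr>))) X) X (\<lambda>(g, x). phi g x)"
        using cH by simp
    qed
  qed
  obtain \<U> K where U: "finite \<U>" "\<forall>U\<in>\<U>. openin X U" "\<Union>\<U> = topspace X"
    and K: "compactin X K" and GK: "{phi g x | g x. g \<in> carrier G \<and> x \<in> K} = topspace X"
    and expA: "\<forall>x\<in>topspace X. \<forall>y\<in>topspace X.
           (\<forall>g\<in>carrier G. subordinate {phi g x, phi g y} (\<U> \<union> {topspace X - K})) \<longrightarrow> x = y"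
    using assms(3) unfolding cocompactly_expansive_def
    apply (elim exE conjE)
    apply (rule that)
    apply assumption+
    done
  have exp: "x = y" if "x\<in>topspace X" "y\<in>topspace X"
           "\<forall>g\<in>carrier G. subordinate {phi g x, phi g y} (\<U> \<union> {topspace X - K})" for x y
    using expA that by blast
  obtain F where F: "finite F" "F \<subseteq> carrier G" and FH: "carrier G = {f \<otimes>\<^bsub>G\<^esub> h | f h. f \<in> F \<and> h \<in> H}"
    using assms(5) unfolding syndetic_def
    apply (elim exE conjE)
    apply (rule that)
    apply assumption+
    done
  have KX: "K \<subseteq> topspace X" using K compactin_subset_topspace by blast
  define K' where "K' = (\<Union>f\<in>F. phi (inv\<^bsub>G\<^esub> f) ` K)"
  define U' where "U' = (\<lambda>\<sigma>. {x \<in> topspace X. \<forall>f\<in>F. phi f x \<in> \<sigma> f}) ` (F \<rightarrow>\<^sub>E \<U>)"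
  have invb: "phi (inv\<^bsub>G\<^esub> f) (phi f z) = z" if "f \<in> carrier G" "z \<in> topspace X" for f z
    using that act3[of "inv\<^bsub>G\<^esub> f" f z] act2[of z] by simp
  show "cocompactly_expansive (G\<lparr>carrier := H\<rparr>) X phi"
    unfolding cocompactly_expansive_def
  proof (intro exI[of _ U'] exI[of _ K'] conjI ballI impI)
    show "finite U'" unfolding U'_def using F U(1) by (simp add: finite_PiE)
    show "openin X V" if hV: "V \<in> U'" for V
    proof -
      obtain \<sigma> where s: "\<sigma> \<in> F \<rightarrow>\<^sub>E \<U>" and V: "V = {x \<in> topspace X. \<forall>f\<in>F. phi f x \<in> \<sigma> f}"
        using hV U'_def by blast
      have "V = (\<Inter>f\<in>F. {x \<in> topspace X. phi f x \<in> \<sigma> f}) \<inter> topspace X" using V by auto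
      moreover have "openin X ((\<Inter>f\<in>F. {x \<in> topspace X. phi f x \<in> \<sigma> f}) \<inter> topspace X)"
        apply (rule openin_INT[OF F(1)])
        apply (rule openin_continuous_map_preimage)
        using phi_cont[OF assms(2)] F(2) s U(2) by (auto simp: PiE_def)
      ultimately show ?thesis by simp
    qed
    show "\<Union>U' = topspace X"
    proof
      show "\<Union>U' \<subseteq> topspace X" unfolding U'_def by auto
      show "topspace X \<subseteq> \<Union>U'"
      proof
        fix x assume x: "x \<in> topspace X"
        define \<sigma> where "\<sigma> = (\<lambda>f. if f \<in> F then (SOME U. U \<in> \<U> \<and> phi f x \<in> U) else undefined)"
        have "\<sigma> f \<in> \<U> \<and> phi f x \<in> \<sigma> f" if "f \<in> F" for f
        proof -
          have "phi f x \<in> \<Union>\<U>" using U(3) act1 x F(2) that by auto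
          then have "\<exists>U. U \<in> \<U> \<and> phi f x \<in> U" by blast
          then show ?thesis unfolding \<sigma>_def using that by (simp add: someI_ex[where P="\<lambda>U. U \<in> \<U> \<and> phi f x \<in> U"])
        qed
        then have "\<sigma> \<in> F \<rightarrow>\<^sub>E \<U>" "x \<in> {x \<in> topspace X. \<forall>f\<in>F. phi f x \<in> \<sigma> f}"
          using x by (auto simp: \<sigma>_def)
        then show "x \<in> \<Union>U'" unfolding U'_def by blast
      qed
    qed
    show "compactin X K'" unfolding K'_def
      by (rule compactin_Union) (use F(2) in \<open>auto intro!: image_compactin[OF K] phi_cont[OF assms(2)] simp: F(1)\<close>)
    have K'X: "K' \<subseteq> topspace X" unfolding K'_def using KX F(2) act1 by (auto intro!: act1)
    show "{phi g x |g x. g \<in> carrier (G\<lparr>carrier := H\<rparr>) \<and> x \<in> K'} = topspace X"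
    proof
      show "{phi g x |g x. g \<in> carrier (G\<lparr>carrier := H\<rparr>) \<and> x \<in> K'} \<subseteq> topspace X"
      proof
        fix z assume "z \<in> {phi g x |g x. g \<in> carrier (G\<lparr>carrier := H\<rparr>) \<and> x \<in> K'}"
        then obtain g x where "z = phi g x" "g \<in> H" "x \<in> K'" by auto
        then show "z \<in> topspace X" using K'X HG act1 by blast
      qed
      show "topspace X \<subseteq> {phi g x |g x. g \<in> carrier (G\<lparr>carrier := H\<rparr>) \<and> x \<in> K'}"
      proof
        fix x assume "x \<in> topspace X"
        then have "x \<in> {phi g x | g x. g \<in> carrier G \<and> x \<in> K}" using GK by simp
        then obtain g k where g: "g \<in> carrier G" "k \<in> K" "x = phi g k" by auto
        then have "inv\<^bsub>G\<^esub> g \<in> carrier G" by simp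
        then have "inv\<^bsub>G\<^esub> g \<in> {f \<otimes>\<^bsub>G\<^esub> h | f h. f \<in> F \<and> h \<in> H}" using FH by simp
        then obtain f h where fh: "f \<in> F" "h \<in> H" "inv\<^bsub>G\<^esub> g = f \<otimes>\<^bsub>G\<^esub> h" by auto
        have f: "f \<in> carrier G" and h: "h \<in> carrier G" using fh F(2) HG by auto
        have "g = inv\<^bsub>G\<^esub> (inv\<^bsub>G\<^esub> g)" using g(1) by simp
        also have "\<dots> = inv\<^bsub>G\<^esub> (f \<otimes>\<^bsub>G\<^esub> h)" using fh(3) by simp
        also have "\<dots> = inv\<^bsub>G\<^esub> h \<otimes>\<^bsub>G\<^esub> inv\<^bsub>G\<^esub> f" using f h by (simp add: grp.inv_mult_group)
        finally have ge: "g = inv\<^bsub>G\<^esub> h \<otimes>\<^bsub>G\<^esub> inv\<^bsub>G\<^esub> f" .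
        have kX: "k \<in> topspace X" using KX g(2) by blast
        have "x = phi (inv\<^bsub>G\<^esub> h) (phi (inv\<^bsub>G\<^esub> f) k)"
          using act3[OF grp.inv_closed[OF h] grp.inv_closed[OF f] kX] g(3) ge by simp
        moreover have "inv\<^bsub>G\<^esub> h \<in> H" by (rule subgroup.m_inv_closed[OF assms(4) fh(2)])
        moreover have "phi (inv\<^bsub>G\<^esub> f) k \<in> K'" unfolding K'_def using fh(1) g(2) by blast
        ultimately show "x \<in> {phi g x |g x. g \<in> carrier (G\<lparr>carrier := H\<rparr>) \<and> x \<in> K'}" by auto
      qed
    qed
    fix x y assume x: "x \<in> topspace X" and y: "y \<in> topspace X"
      and H1: "\<forall>g\<in>carrier (G\<lparr>carrier := H\<rparr>). subordinate {phi g x, phi g y} (U' \<union> {topspace X - K'})"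
    show "x = y"
    proof (rule exp[OF x y], intro ballI)
      fix g assume g: "g \<in> carrier G"
      then obtain f h where fh: "f \<in> F" "h \<in> H" "g = f \<otimes>\<^bsub>G\<^esub> h" using FH by blast
      have f: "f \<in> carrier G" and h: "h \<in> carrier G" using fh F(2) HG by auto
      have gx: "phi g x = phi f (phi h x)" and gy: "phi g y = phi f (phi h y)"
        using act3 f h x y fh(3) by auto
      have hx: "phi h x \<in> topspace X" and hy: "phi h y \<in> topspace X" using act1 h x y by auto
      from H1 fh(2) have "subordinate {phi h x, phi h y} (U' \<union> {topspace X - K'})" by simp
      then obtain V where V: "V \<in> U' \<union> {topspace X - K'}" "{phi h x, phi h y} \<subseteq> V"
        unfolding subordinate_def by blast
      show "subordinate {phi g x, phi g y} (\<U> \<union> {topspace X - K})"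
      proof (cases "V \<in> U'")
        case True
        then obtain \<sigma> where s: "\<sigma> \<in> F \<rightarrow>\<^sub>E \<U>" and V': "V = {x \<in> topspace X. \<forall>f\<in>F. phi f x \<in> \<sigma> f}"
          using U'_def by blast
        have "{phi g x, phi g y} \<subseteq> \<sigma> f" using V(2) V' fh(1) gx gy by auto
        moreover have "\<sigma> f \<in> \<U>" using s fh(1) by auto
        ultimately show ?thesis unfolding subordinate_def by blast
      next
        case False
        then have V2: "V = topspace X - K'" using V(1) by blast
        have nk: "phi f z \<notin> K" if "z \<in> V" for z
        proof
          assume "phi f z \<in> K"
          then have "phi (inv\<^bsub>G\<^esub> f) (phi f z) \<in> K'" unfolding K'_def using fh(1) by blast
          then show False using invb f that V2 by auto
        qed
        have "{phi g x, phi g y} \<subseteq> topspace X - K"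
          using nk V(2) gx gy act1[OF g x] act1[OF g y] by auto
        then show ?thesis unfolding subordinate_def by blast
      qed
    qed
  qed
qed

end
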